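(* $\mathrm{Pol}(\mathbb{M}_1)$ does not satisfy $\Sigma_1$, but $\mathcal{C}_2$ satisfies $\Sigma_1$.
   Context: $\mathbb{M}_1=(\{0,1,2\};\psi_2,\mu_2,\{0\},\{1\},\{2\})$ with $\psi_2=\{(0,1),(1,0),(2,2)\}$ and $\mu_2$ the equivalence relation with classes $\{0,1\},\{2\}$; $\mathcal{C}_2=\mathrm{Pol}(\{0,1\};\neq,\{0\},\{1\})$, where $\mathrm{Pol}$ denotes the clone of all operations preserving the given relations. A clone satisfies $\Sigma_1$ if it contains a ternary operation $f$ that is a quasi majority operation, i.e. $f(x,y,y)\approx f(y,x,y)\approx f(y,y,x)\approx f(y,y,y)$, and additionally satisfies $f(x,y,z)\approx f(z,y,x)$. *)

theory Defs
  imports Main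
begin

text \<open>Relations on a domain are represented as sets of tuples (lists of equal length).\<close>

definition preserves3 :: "('a \<Rightarrow> 'a \<Rightarrow> 'a \<Rightarrow> 'a) \<Rightarrow> 'a list set \<Rightarrow> bool" where
  "preserves3 f R \<longleftrightarrow>
     (\<forall>r1\<in>R. \<forall>r2\<in>R. \<forall>r3\<in>R. length r1 = length r2 \<and> length r2 = length r3 \<longrightarrow>
        map (\<lambda>i. f (r1 ! i) (r2 ! i) (r3 ! i)) [0..<length r1] \<in> R)"

definition Pol3 :: "'a set \<Rightarrow> 'a list set set \<Rightarrow> ('a \<Rightarrow> 'a \<Rightarrow> 'a \<Rightarrow> 'a) set" where
  "Pol3 A Rs = {f. (\<forall>x\<in>A. \<forall>y\<in>A. \<forall>z\<in>A. f x y z \<in> A) \<and> (\<forall>R\<in>Rs. preserves3 f R)}"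

definition quasi_majority :: "'a set \<Rightarrow> ('a \<Rightarrow> 'a \<Rightarrow> 'a \<Rightarrow> 'a) \<Rightarrow> bool" where
  "quasi_majority A f \<longleftrightarrow>
     (\<forall>x\<in>A. \<forall>y\<in>A. f x y y = f y x y \<and> f y x y = f y y x \<and> f y y x = f y y y)"

definition satisfies_Sigma1 :: "'a set \<Rightarrow> 'a list set set \<Rightarrow> bool" where
  "satisfies_Sigma1 A Rs \<longleftrightarrow>
     (\<exists>f\<in>Pol3 A Rs. quasi_majority A f \<and> (\<forall>x\<in>A. \<forall>y\<in>A. \<forall>z\<in>A. f x y z = f z y x))"

definition psi2 :: "nat list set" where "psi2 = {[0,1],[1,0],[2,2]}"
definition mu2 :: "nat list set" where "mu2 = {[0,0],[0,1],[1,0],[1,1],[2,2]}"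
definition M1_rels :: "nat list set set" where
  "M1_rels = {psi2, mu2, {[0]}, {[1]}, {[2]}}"

definition neq01 :: "nat list set" where "neq01 = {[0,1],[1,0]}"
definition C2_rels :: "nat list set set" where
  "C2_rels = {neq01, {[0]}, {[1]}}"

end

theory Submission
  imports Defs
begin

lemma part1: "\<not> satisfies_Sigma1 {0,1,2::nat} M1_rels"
proof
  assume "satisfies_Sigma1 {0,1,2::nat} M1_rels"
  then obtain f where fP: "f \<in> Pol3 {0,1,2::nat} M1_rels" and qm: "quasi_majority {0,1,2} f"
    and sym: "\<forall>x\<in>{0,1,2::nat}. \<forall>y\<in>{0,1,2}. \<forall>z\<in>{0,1,2}. f x y z = f z y x"
    unfolding satisfies_Sigma1_def by blast
  have ps: "preserves3 f psi2" and mu: "preserves3 f mu2" and c0: "preserves3 f {[0]}"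
    using fP unfolding Pol3_def M1_rels_def by auto
  have "[f 0 0 0] \<in> {[0::nat]}"
    using c0 unfolding preserves3_def by (drule_tac x="[0]" in bspec, auto)
  hence f0: "f 0 0 0 = 0" by simp
  have "f 0 2 0 = f 0 0 0" using qm unfolding quasi_majority_def by auto
  hence f020: "f 0 2 0 = 0" using f0 by simp
  have "[f 0 2 1, f 1 2 0] \<in> psi2"
    using ps unfolding preserves3_def
    apply (drule_tac x="[0,1]" in bspec, simp add: psi2_def)
    apply (drule_tac x="[2,2]" in bspec, simp add: psi2_def)
    apply (drule_tac x="[1,0]" in bspec, simp add: psi2_def)
    by (simp add: upt_rec)
  moreover have "f 1 2 0 = f 0 2 1" using sym[rule_format, of 0 2 1] by simp
  ultimately have a: "f 0 2 1 = 2" by (auto simp: psi2_def)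
  have "[f 0 2 1, f 0 2 0] \<in> mu2"
    using mu unfolding preserves3_def
    apply (drule_tac x="[0,0]" in bspec, simp add: mu2_def)
    apply (drule_tac x="[2,2]" in bspec, simp add: mu2_def)
    apply (drule_tac x="[1,0]" in bspec, simp add: mu2_def)
    by (simp add: upt_rec)
  thus False using a f020 by (simp add: mu2_def)
qed

definition maj :: "nat \<Rightarrow> nat \<Rightarrow> nat \<Rightarrow> nat" where
  "maj x y z = (if x = y then x else z)"

lemma pres_gen:
  assumes "\<And>r1 r2 r3. r1 \<in> R \<Longrightarrow> r2 \<in> R \<Longrightarrow> r3 \<in> R \<Longrightarrow> length r1 = length r2 \<Longrightarrow> length r2 = length r3
     \<Longrightarrow> map (\<lambda>i. maj (r1 ! i) (r2 ! i) (r3 ! i)) [0..<length r1] \<in> R"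
  shows "preserves3 maj R" using assms unfolding preserves3_def by blast

lemma part2: "satisfies_Sigma1 {0,1::nat} C2_rels"
  unfolding satisfies_Sigma1_def
proof (rule bexI[of _ maj], intro conjI)
  show "quasi_majority {0, 1} maj" unfolding quasi_majority_def maj_def by auto
  show "\<forall>x\<in>{0,1::nat}. \<forall>y\<in>{0,1}. \<forall>z\<in>{0,1}. maj x y z = maj z y x" unfolding maj_def by auto
  have "preserves3 maj neq01"
    by (rule pres_gen) (auto simp: neq01_def maj_def upt_rec)
  moreover have "preserves3 maj {[0]}" by (rule pres_gen) (auto simp: maj_def upt_rec)
  moreover have "preserves3 maj {[1]}" by (rule pres_gen) (auto simp: maj_def upt_rec)
  ultimately show "maj \<in> Pol3 {0, 1} C2_rels"
    unfolding Pol3_def C2_rels_def by (auto simp: maj_def)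
qed

theorem lemma6p7:
  shows "\<not> satisfies_Sigma1 {0,1,2::nat} M1_rels \<and> satisfies_Sigma1 {0,1::nat} C2_rels"
  using part1 part2 by blast

end
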